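(* Consider the opinion--action model described in the context with $\phi\in(0,1)$ and arbitrary initial values, and its augmented state matrices $P(t)$. Then for every $t\ge1$, the digraph $\mathcal{G}(P(t))$ has one of the following structures: (i) it is strongly connected; (ii) its condensation digraph consists of one sink and one or more singleton sources.
   Context: Fix an integer $n\ge 1$, agent set $\mathcal{V}=\{1,\dots,n\}$, a confidence threshold $\epsilon\in[0,1]$ and a decision weight $\phi\in[0,1]$. Each agent $i$ has opinion $x_i(t)\in[0,1]$ and action $y_i(t)\in[0,1]$. For $t\in\mathbb{Z}_{\ge0}$ the model evolves by: $\mathcal{N}_i(t)=\{j\in\mathcal{V}\mid j\neq i,\ |x_i(t)-y_j(t)|\le\epsilon\}$; $x_i(t+1)=\frac{x_i(t)+\sum_{j\in\mathcal{N}_i(t)}y_j(t)}{|\mathcal{N}_i(t)|+1}$; $y_i(t+1)=\phi\,x_i(t+1)+(1-\phi)\,y_{\mathrm{avg}}(t)$ with $y_{\mathrm{avg}}(t)=\frac1n\sum_{k=1}^n y_k(t)$. For $t\ge1$, $P(t)=\begin{bmatrix}P_{11}(t)&P_{12}(t)\\ P_{21}&P_{22}\end{bmatrix}\in\mathbb{R}^{2n\times2n}$ with $n\times n$ blocks: $[P_{11}(t)]_{ij}=\frac{1}{|\mathcal{N}_i(t)|+1}$ if $j=i$, $\frac{\phi}{|\mathcal{N}_i(t)|+1}$ if $j\in\mathcal{N}_i(t)$, and $0$ otherwise; $[P_{12}(t)]_{ij}=\frac{(1-\phi)|\mathcal{N}_i(t)|}{(|\mathcal{N}_i(t)|+1)n}$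 for all $i,j$; $P_{21}=\phi I_n$; $P_{22}=\frac{1-\phi}{n}\mathbf{1}_n\mathbf{1}_n^\top$. (With $z_i(t)=x_i(t)$, $z_{n+i}(t)=y_i(t-1)$ one has $\mathbf{z}(t+1)=P(t)\mathbf{z}(t)$.) For a nonnegative matrix $A\in\mathbb{R}^{m\times m}$, $\mathcal{G}(A)$ is the digraph on $\{1,\dots,m\}$ with a directed edge $(j,i)$ (from $j$ to $i$) iff $a_{ij}>0$. A strongly connected component (SCC) is a maximal strongly connected subgraph; the condensation digraph has the SCCs as nodes and an edge from SCC$_a$ to SCC$_b$ ($a\neq b$) iff some node of SCC$_a$ has an edge to some node of SCC$_b$. A source is a node with no incoming edges, a sink a node with no outgoing edges; a singleton SCC has exactly one node. *)

theory Defs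
  imports Complex_Main
begin

text \<open>Agents are indexed 0,...,n-1 (the paper uses 1,...,n).
  Opinions and actions are trajectories  x, y :: nat => nat => real,
  with x t i the opinion of agent i at time t.\<close>

definition nbrs :: "nat \<Rightarrow> real \<Rightarrow> (nat \<Rightarrow> nat \<Rightarrow> real) \<Rightarrow> (nat \<Rightarrow> nat \<Rightarrow> real)
                     \<Rightarrow> nat \<Rightarrow> nat \<Rightarrow> nat set" where
  "nbrs n \<epsilon> x y t i = {j. j < n \<and> j \<noteq> i \<and> \<bar>x t i - y t j\<bar> \<le> \<epsilon>}"

definition oa_model :: "nat \<Rightarrow> real \<Rightarrow> real \<Rightarrow> (nat \<Rightarrow> nat \<Rightarrow> real) \<Rightarrow> (nat \<Rightarrow> nat \<Rightarrow> real) \<Rightarrow> bool" where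
  "oa_model n \<epsilon> \<phi> x y \<longleftrightarrow>
     (\<forall>t. \<forall>i<n.
        x (Suc t) i = (x t i + (\<Sum>j\<in>nbrs n \<epsilon> x y t i. y t j)) / (real (card (nbrs n \<epsilon> x y t i)) + 1)
      \<and> y (Suc t) i = \<phi> * x (Suc t) i + (1 - \<phi>) * ((\<Sum>k<n. y t k) / real n))"

text \<open>The augmented 2n x 2n state matrix P(t), indices 0..2n-1; entry (i,j).
  Rows/columns 0..n-1 correspond to x, rows/columns n..2n-1 to y(t-1).\<close>
definition Pmat :: "nat \<Rightarrow> real \<Rightarrow> real \<Rightarrow> (nat \<Rightarrow> nat \<Rightarrow> real) \<Rightarrow> (nat \<Rightarrow> nat \<Rightarrow> real)
                     \<Rightarrow> nat \<Rightarrow> nat \<Rightarrow> nat \<Rightarrow> real" where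
  "Pmat n \<epsilon> \<phi> x y t i j =
     (let N = nbrs n \<epsilon> x y t i in
      if i < n \<and> j < n then
        (if j = i then 1 / (real (card N) + 1)
         else if j \<in> N then \<phi> / (real (card N) + 1) else 0)
      else if i < n \<and> n \<le> j \<and> j < 2*n then
        (1 - \<phi>) * real (card N) / ((real (card N) + 1) * real n)
      else if n \<le> i \<and> i < 2*n \<and> j < n then
        (if j = i - n then \<phi> else 0)
      else if n \<le> i \<and> i < 2*n \<and> n \<le> j \<and> j < 2*n then
        (1 - \<phi>) / real n
      else 0)"

definition gedges :: "nat \<Rightarrow> (nat \<Rightarrow> nat \<Rightarrow> real) \<Rightarrow> (nat \<times> nat) set" where
  "gedges m A = {(j, i). j < m \<and> i < m \<and> A i j > 0}"

definition strongly_connected_mat :: "nat \<Rightarrow> (nat \<Rightarrow> nat \<Rightarrow> real) \<Rightarrow> bool" where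
  "strongly_connected_mat m A \<longleftrightarrow> (\<forall>u<m. \<forall>v<m. (u, v) \<in> (gedges m A)\<^sup>*)"

definition scc_of :: "nat \<Rightarrow> (nat \<Rightarrow> nat \<Rightarrow> real) \<Rightarrow> nat \<Rightarrow> nat set" where
  "scc_of m A v = {u. u < m \<and> (u, v) \<in> (gedges m A)\<^sup>* \<and> (v, u) \<in> (gedges m A)\<^sup>*}"

definition sccs :: "nat \<Rightarrow> (nat \<Rightarrow> nat \<Rightarrow> real) \<Rightarrow> nat set set" where
  "sccs m A = scc_of m A ` {..<m}"

definition cond_edge :: "nat \<Rightarrow> (nat \<Rightarrow> nat \<Rightarrow> real) \<Rightarrow> nat set \<Rightarrow> nat set \<Rightarrow> bool" where
  "cond_edge m A C1 C2 \<longleftrightarrow> C1 \<noteq> C2 \<and> (\<exists>a\<in>C1. \<exists>b\<in>C2. (a, b) \<in> gedges m A)"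

definition cond_source :: "nat \<Rightarrow> (nat \<Rightarrow> nat \<Rightarrow> real) \<Rightarrow> nat set \<Rightarrow> bool" where
  "cond_source m A C \<longleftrightarrow> C \<in> sccs m A \<and> \<not> (\<exists>D\<in>sccs m A. cond_edge m A D C)"

definition cond_sink :: "nat \<Rightarrow> (nat \<Rightarrow> nat \<Rightarrow> real) \<Rightarrow> nat set \<Rightarrow> bool" where
  "cond_sink m A C \<longleftrightarrow> C \<in> sccs m A \<and> \<not> (\<exists>D\<in>sccs m A. cond_edge m A C D)"

definition one_sink_singleton_sources :: "nat \<Rightarrow> (nat \<Rightarrow> nat \<Rightarrow> real) \<Rightarrow> bool" where
  "one_sink_singleton_sources m A \<longleftrightarrow>
     (\<exists>S. cond_sink m A S \<and>
          sccs m A - {S} \<noteq> {} \<and>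
          (\<forall>C\<in>sccs m A - {S}. cond_source m A C \<and> card C = 1))"

end

theory Submission
  imports Defs
begin

lemma nbrs_finite: "finite (nbrs n \<epsilon> x y t i)"
  unfolding nbrs_def by (rule finite_subset[of _ "{..<n}"]) auto

theorem theorem2:
  fixes n t :: nat and \<epsilon> \<phi> :: real and x y :: "nat \<Rightarrow> nat \<Rightarrow> real"
  assumes "n \<ge> 1"
    and "0 \<le> \<epsilon>" and "\<epsilon> \<le> 1"
    and "0 < \<phi>" and "\<phi> < 1"
    and "\<forall>i<n. 0 \<le> x 0 i \<and> x 0 i \<le> 1 \<and> 0 \<le> y 0 i \<and> y 0 i \<le> 1"
    and "oa_model n \<epsilon> \<phi> x y"
    and "t \<ge> 1"
  shows "strongly_connected_mat (2*n) (Pmat n \<epsilon> \<phi> x y t)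
       \<or> one_sink_singleton_sources (2*n) (Pmat n \<epsilon> \<phi> x y t)"
proof -
  define N where "N i = nbrs n \<epsilon> x y t i" for i
  define P where "P = Pmat n \<epsilon> \<phi> x y t"
  define G where "G = gedges (2*n) P"
  define S0 where "S0 = {u. n \<le> u \<and> u < 2*n} \<union> {i. i < n \<and> N i \<noteq> {}}"
  have np: "real n > 0" using assms(1) by simp
  have L1: "(u, v) \<in> G" if "n \<le> u" "u < 2*n" "n \<le> v" "v < 2*n" for u v
    using that assms(5) np unfolding G_def gedges_def P_def Pmat_def Let_def by auto
  have L2: "(i, n+i) \<in> G" if "i < n" for i
    using that assms(4) unfolding G_def gedges_def P_def Pmat_def Let_def by auto
  have L3: "(n, i) \<in> G" if "i < n" "N i \<noteq> {}" for i
  proof -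
    have "card (N i) > 0" using that nbrs_finite[of n \<epsilon> x y t i] unfolding N_def
      by (simp add: card_gt_0_iff)
    hence "(1 - \<phi>) * real (card (N i)) / ((real (card (N i)) + 1) * real n) > 0"
      using assms(5) np by simp
    thus ?thesis using that assms(1) unfolding G_def gedges_def P_def Pmat_def Let_def N_def
      by auto
  qed
  have L4: "j = i" if "i < n" "N i = {}" "(j, i) \<in> G" for i j
    using that unfolding G_def gedges_def P_def Pmat_def Let_def N_def
    by (auto split: if_splits)
  have L4': "a = i" if "i < n" "N i = {}" "(a, i) \<in> G\<^sup>*" for i a
  proof -
    have "z = i \<longrightarrow> a = i" if "(a, z) \<in> G\<^sup>*" for z
      using that
    proof (induction rule: rtrancl_induct)
      case base then show ?case by simp
    next
      case (step y' z)
      then show ?case using L4[OF \<open>i < n\<close> \<open>N i = {}\<close>] by blast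
    qed
    thus ?thesis using that by blast
  qed
  have toY: "(u, n) \<in> G\<^sup>*" if "u \<in> S0" for u
  proof (cases "u < n")
    case True
    have "(u, n+u) \<in> G" using L2 True by blast
    moreover have "(n+u, n) \<in> G" using L1 True by simp
    ultimately show ?thesis by (meson rtrancl.simps r_into_rtrancl rtrancl_trans)
  next
    case False
    then show ?thesis using that L1[of u n] assms(1) unfolding S0_def by auto
  qed
  have fromY: "(n, u) \<in> G\<^sup>*" if "u \<in> S0" for u
  proof (cases "u < n")
    case True
    then show ?thesis using that L3 unfolding S0_def by auto
  next
    case False
    then show ?thesis using that L1[of n u] assms(1) unfolding S0_def by auto
  qed
  have conn: "(u, v) \<in> G\<^sup>*" if "u \<in> S0" "v \<in> S0" for u v
    using toY[OF that(1)] fromY[OF that(2)] by (rule rtrancl_trans)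
  have S0lt: "u < 2*n" if "u \<in> S0" for u using that unfolding S0_def by auto
  have nS0: "u \<in> S0" if "u < 2*n" "\<not> (u < n \<and> N u = {})" for u
    using that unfolding S0_def by auto
  have sccS0: "scc_of (2*n) P v = S0" if "v \<in> S0" for v
  proof
    show "scc_of (2*n) P v \<subseteq> S0"
    proof
      fix u assume u: "u \<in> scc_of (2*n) P v"
      show "u \<in> S0"
      proof (rule ccontr)
        assume "u \<notin> S0"
        hence "u < n" "N u = {}" using nS0 u unfolding scc_of_def by auto
        moreover have "(v, u) \<in> G\<^sup>*" using u unfolding scc_of_def G_def by auto
        ultimately have "v = u" using L4' by blast
        thus False using \<open>u \<notin> S0\<close> that by simp
      qed
    qed
  next
    show "S0 \<subseteq> scc_of (2*n) P v"
      using conn that S0lt unfolding scc_of_def G_def by auto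
  qed
  have sccI: "scc_of (2*n) P i = {i}" if "i < n" "N i = {}" for i
  proof -
    have "u = i" if "u \<in> scc_of (2*n) P i" for u
      using that L4'[OF \<open>i < n\<close> \<open>N i = {}\<close>] unfolding scc_of_def G_def by auto
    moreover have "i \<in> scc_of (2*n) P i" using that unfolding scc_of_def by auto
    ultimately show ?thesis by blast
  qed
  have nin: "n \<in> S0" using assms(1) unfolding S0_def by auto
  have sccs_eq: "sccs (2*n) P = {S0} \<union> {{i} | i. i < n \<and> N i = {}}"
  proof
    show "sccs (2*n) P \<subseteq> {S0} \<union> {{i} | i. i < n \<and> N i = {}}"
    proof
      fix C assume "C \<in> sccs (2*n) P"
      then obtain v where v: "v < 2*n" "C = scc_of (2*n) P v" unfolding sccs_def by auto
      show "C \<in> {S0} \<union> {{i} | i. i < n \<and> N i = {}}"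
      proof (cases "v < n \<and> N v = {}")
        case True then show ?thesis using sccI v by auto
      next
        case False then show ?thesis using sccS0 nS0 v by auto
      qed
    qed
  next
    show "{S0} \<union> {{i} | i. i < n \<and> N i = {}} \<subseteq> sccs (2*n) P"
      using sccS0[OF nin] sccI nin S0lt unfolding sccs_def
      by (auto intro!: image_eqI)
  qed
  show ?thesis
  proof (cases "\<forall>i<n. N i \<noteq> {}")
    case True
    hence "\<forall>u<2*n. u \<in> S0" using nS0 by auto
    hence "strongly_connected_mat (2*n) P"
      unfolding strongly_connected_mat_def using conn G_def by auto
    thus ?thesis unfolding P_def by simp
  next
    case False
    then obtain i0 where i0: "i0 < n" "N i0 = {}" by auto
    have i0S: "i0 \<notin> S0" using i0 unfolding S0_def by auto
    have sink: "cond_sink (2*n) P S0"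
      unfolding cond_sink_def
    proof
      show "S0 \<in> sccs (2*n) P" using sccs_eq by auto
      show "\<not> (\<exists>D\<in>sccs (2*n) P. cond_edge (2*n) P S0 D)"
      proof
        assume "\<exists>D\<in>sccs (2*n) P. cond_edge (2*n) P S0 D"
        then obtain D a b where D: "D \<in> sccs (2*n) P" "D \<noteq> S0" "a \<in> S0" "b \<in> D" "(a,b) \<in> G"
          unfolding cond_edge_def G_def by auto
        then obtain i where i: "i < n" "N i = {}" "D = {i}" using sccs_eq by auto
        hence "a = i" using L4 D by auto
        thus False using D i unfolding S0_def by auto
      qed
    qed
    have ne: "sccs (2*n) P - {S0} \<noteq> {}"
    proof -
      have "{i0} \<in> sccs (2*n) P" using sccs_eq i0 by auto
      moreover have "{i0} \<noteq> S0" using i0S by auto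
      ultimately show ?thesis by blast
    qed
    have src: "cond_source (2*n) P C \<and> card C = 1" if C: "C \<in> sccs (2*n) P - {S0}" for C
    proof -
      obtain i where i: "i < n" "N i = {}" "C = {i}" using C sccs_eq by auto
      have "\<not> (\<exists>D\<in>sccs (2*n) P. cond_edge (2*n) P D C)"
      proof
        assume "\<exists>D\<in>sccs (2*n) P. cond_edge (2*n) P D C"
        then obtain D a where D: "D \<in> sccs (2*n) P" "D \<noteq> C" "a \<in> D" "(a,i) \<in> G"
          unfolding cond_edge_def G_def using i by auto
        hence ai: "a = i" using L4 i by auto
        show False
        proof (cases "D = S0")
          case True then show ?thesis using ai D i unfolding S0_def by auto
        next
          case False
          then obtain k where "D = {k}" using D sccs_eq by auto
          then show ?thesis using ai D i by auto
        qed
      qed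
      thus ?thesis using C i unfolding cond_source_def by auto
    qed
    have "one_sink_singleton_sources (2*n) P"
      unfolding one_sink_singleton_sources_def using sink ne src by blast
    thus ?thesis unfolding P_def by simp
  qed
qed

end
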